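(* Let $n$ and $s$ be integers with $\gcd(s,n)=1$ and let $\mathcal C$ be an $\mathbb F_{q^n}$-subspace of $\mathcal L_{n,q}$ of dimension $k>2$. Let $V:=\mathcal C\cap\mathcal C^{[s]}$. Suppose $\dim V=k-2$ and $\mathcal C\cap\mathcal U_1=\{0\}$. Then: (1) if $\dim(V\cap V^{[s]})=k-3$, there exist $p(x),q(x)\in\mathcal C$ such that \[\mathcal C=\langle p(x),p(x)^{[s]},\ldots,p(x)^{[s(k-2)]}\rangle_{\mathbb F_{q^n}}\oplus\langle q(x)\rangle_{\mathbb F_{q^n}};\] (2) if $\dim(V\cap V^{[s]})=k-4$, there exist $p(x),q(x)\in\mathcal C$ and integers $i,j\ge2$ with $i+j=k$ such that \[\mathcal C=\langle p(x),p(x)^{[s]},\ldots,p(x)^{[s(i-1)]}\rangle_{\mathbb F_{q^n}}\oplus\langle q(x),q(x)^{[s]},\ldots,q(x)^{[s(j-1)]}\rangle_{\mathbb F_{q^n}}.\]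
   Context: $q$ is a prime power, $[i]:=q^i$. $\mathcal L_{n,q}$ is the $\mathbb F_{q^n}$-vector space of linearized polynomials $f(x)=\sum_{i=0}^{n-1}a_ix^{[i]}$, $a_i\in\mathbb F_{q^n}$, identified with $\mathbb F_q$-linear maps of $\mathbb F_{q^n}$ (rank = dimension of the image over $\mathbb F_q$). For $f(x)=\sum_i a_ix^{[i]}$, $f(x)^{[j]}:=x^{[j]}\circ f(x)=\sum_i a_i^{[j]}x^{[(i+j)\bmod n]}$, and for a subset $W$, $W^{[j]}=\{f^{[j]}\colon f\in W\}$. $\mathcal U_1$ is the set of elements of $\mathcal L_{n,q}$ of rank at most one. *)

theory Defs
  imports Main HOL.Vector_Spaces "HOL-Computational_Algebra.Primes" "HOL-Library.Function_Algebras"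
begin

text \<open>The field F_{q^n} is a finite field type 'a with CARD('a) = q^n.
  A linearized polynomial f(x) = sum_{i<n} a_i x^[i] is represented by its
  coefficient function (nat => 'a), zero outside {..<n}.\<close>

definition lin_polys :: "nat \<Rightarrow> (nat \<Rightarrow> 'a::zero) set" where
  "lin_polys n = {a. \<forall>i\<ge>n. a i = 0}"

definition cscale :: "'a::field \<Rightarrow> (nat \<Rightarrow> 'a) \<Rightarrow> (nat \<Rightarrow> 'a)" where
  "cscale c a = (\<lambda>i. c * a i)"

abbreviation Fspan :: "(nat \<Rightarrow> 'a::field) set \<Rightarrow> (nat \<Rightarrow> 'a) set" where
  "Fspan S \<equiv> module.span cscale S"

abbreviation Fsubspace :: "(nat \<Rightarrow> 'a::field) set \<Rightarrow> bool" where
  "Fsubspace S \<equiv> module.subspace cscale S"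

abbreviation Fdim :: "(nat \<Rightarrow> 'a::field) set \<Rightarrow> nat" where
  "Fdim S \<equiv> vector_space.dim cscale S"

definition lin_eval :: "nat \<Rightarrow> nat \<Rightarrow> (nat \<Rightarrow> 'a::field) \<Rightarrow> 'a \<Rightarrow> 'a" where
  "lin_eval q n a x = (\<Sum>i<n. a i * x ^ (q ^ i))"

definition subfield_q :: "nat \<Rightarrow> 'a::field set" where
  "subfield_q q = {x. x ^ q = x}"

definition rank_le_one :: "nat \<Rightarrow> nat \<Rightarrow> (nat \<Rightarrow> 'a::field) \<Rightarrow> bool" where
  "rank_le_one q n a \<longleftrightarrow> (\<exists>y. \<forall>x. \<exists>c\<in>subfield_q q. lin_eval q n a x = c * y)"

definition U1 :: "nat \<Rightarrow> nat \<Rightarrow> (nat \<Rightarrow> 'a::field) set" where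
  "U1 q n = {a \<in> lin_polys n. rank_le_one q n a}"

text \<open>f^[j] = x^[j] o f, for an integer j (taken mod n):
  coefficient of x^[m] is a_{(m-j) mod n}^[j mod n].\<close>
definition frob :: "nat \<Rightarrow> nat \<Rightarrow> int \<Rightarrow> (nat \<Rightarrow> 'a::field) \<Rightarrow> (nat \<Rightarrow> 'a)" where
  "frob q n j a = (\<lambda>m. if m < n
      then a (nat ((int m - j) mod int n)) ^ (q ^ nat (j mod int n))
      else 0)"

definition frob_set :: "nat \<Rightarrow> nat \<Rightarrow> int \<Rightarrow> (nat \<Rightarrow> 'a::field) set \<Rightarrow> (nat \<Rightarrow> 'a) set" where
  "frob_set q n j W = frob q n j ` W"

end

theory Submission
  imports Defs "HOL-Number_Theory.Residues" "HOL-Computational_Algebra.Polynomial"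
begin

lemma power_card_same:
  fixes x :: "'a::{field,finite}"
  shows   "x ^ card (UNIV :: 'a set) = x"
proof (cases "x = 0")
  case False
  have "x * (\<Prod>y\<in>UNIV-{0}. x * y) = x * x ^ (card (UNIV :: 'a set) - 1) * \<Prod>(UNIV-{0})"
    by (simp add: prod.distrib mult_ac)
  also have "x * x ^ (card (UNIV :: 'a set) - 1) = x ^ Suc (card (UNIV :: 'a set) - 1)"
    by (subst power_Suc) auto
  also have "Suc (card (UNIV :: 'a set) - 1) = card (UNIV :: 'a set)"
    using finite_UNIV_card_ge_0[where ?'a = 'a] by simp
  also have "(\<Prod>y\<in>UNIV-{0}. x * y) = (\<Prod>y\<in>UNIV-{0}. y)"
    by (rule prod.reindex_bij_witness[of _ "\<lambda>y. y / x" "\<lambda>y. x * y"]) (use False in auto)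
  finally show ?thesis
    by simp
qed (use finite_UNIV_card_ge_0[where ?'a = 'a] in auto)

lemma CHAR_eq_p:
  assumes "prime p" "card (UNIV :: 'a::{field,finite} set) = p ^ m"
  shows "CHAR('a) = p"
proof -
  have "CHAR('a) > 0" by (simp add: finite_imp_CHAR_pos)
  hence pc: "prime CHAR('a)" using prime_CHAR_semidom by blast
  have "CHAR('a) dvd p ^ m" using CHAR_dvd_CARD[where 'a='a] assms(2) by simp
  hence "CHAR('a) dvd p" using pc prime_dvd_power by blast
  thus ?thesis using pc assms(1) by (simp add: primes_dvd_imp_eq)
qed


locale fsetup =
  fixes q n p e :: nat and s :: int and C :: "(nat \<Rightarrow> 'a::{field,finite}) set"
  assumes p_prime: "prime p" and e_ge: "e \<ge> 1" and q_def: "q = p ^ e"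
    and n_ge: "n \<ge> 1" and card_a: "card (UNIV :: 'a set) = q ^ n"
    and gcd_sn: "gcd s (int n) = 1"
begin

lemma q_ge2: "q \<ge> 2"
proof -
  have "p \<ge> 2" using p_prime prime_ge_2_nat by blast
  moreover have "p \<le> p ^ e" using e_ge \<open>p \<ge> 2\<close>
    by (intro self_le_power) auto
  ultimately show ?thesis using q_def by simp
qed

lemma charp: "CHAR('a) = p"
  using CHAR_eq_p[of p "e*n", where 'a='a] card_a q_def p_prime by (simp add: power_mult)

lemma pow_qn: "(x::'a) ^ (q ^ n) = x"
  using power_card_same[of x] card_a by simp

lemma pow_qn_mult: "(x::'a) ^ (q ^ (n * j)) = x"
proof (induction j)
  case (Suc j)
  have "x ^ (q ^ (n * Suc j)) = (x ^ (q ^ (n * j))) ^ (q ^ n)"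
    by (simp add: power_add power_mult[symmetric] mult.commute)
  thus ?case using Suc pow_qn by simp
qed simp

lemma pow_q_mod: "(x::'a) ^ (q ^ a) = x ^ (q ^ (a mod n))"
proof -
  have "a = n * (a div n) + a mod n" by simp
  hence "q ^ a = q ^ (n * (a div n)) * q ^ (a mod n)" by (metis power_add)
  hence "x ^ (q ^ a) = (x ^ (q ^ (n * (a div n)))) ^ (q ^ (a mod n))" by (simp add: power_mult)
  thus ?thesis using pow_qn_mult by simp
qed

lemma fresh: "((x::'a) + y) ^ (q ^ a) = x ^ (q ^ a) + y ^ (q ^ a)"
proof -
  have "q ^ a = CHAR('a) ^ (e * a)" using charp q_def by (simp add: power_mult)
  moreover have "prime CHAR('a)" using charp p_prime by simp
  ultimately show ?thesis using freshmans_dream' by blast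
qed

lemma fresh_diff: "((x::'a) - y) ^ (q ^ a) = x ^ (q ^ a) - y ^ (q ^ a)"
  using fresh[of "x - y" y a] by (simp add: algebra_simps)

lemma fresh_sum: "(sum f A :: 'a) ^ (q ^ a) = (\<Sum>i\<in>A. f i ^ (q ^ a))"
  by (induction A rule: infinite_finite_induct) (use q_ge2 in \<open>auto simp: fresh\<close>)

lemma frob_add: "frob q n j ((x::nat\<Rightarrow>'a) + y) = frob q n j x + frob q n j y"
  by (auto simp: fun_eq_iff frob_def fresh)

lemma frob_scale: "frob q n j (cscale c (x::nat\<Rightarrow>'a)) = cscale (c ^ (q ^ nat (j mod int n))) (frob q n j x)"
  by (auto simp: fun_eq_iff frob_def cscale_def power_mult_distrib)

lemma frob_zero: "frob q n j (0::nat\<Rightarrow>'a) = 0"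
  using q_ge2 by (auto simp: fun_eq_iff frob_def)

lemma frob_L: "frob q n j x \<in> lin_polys n"
  by (simp add: lin_polys_def frob_def)

lemma frob_sum: "frob q n j (sum f A :: nat\<Rightarrow>'a) = (\<Sum>i\<in>A. frob q n j (f i))"
proof (induction A rule: infinite_finite_induct)
  case (infinite A) show ?case by (simp only: sum.infinite[OF infinite] frob_zero)
next
  case empty show ?case by (simp only: sum.empty frob_zero)
next
  case (insert x F) show ?case by (simp only: sum.insert[OF insert(1,2)] frob_add insert(3))
qed

lemma frob_0: "(x::nat\<Rightarrow>'a) \<in> lin_polys n \<Longrightarrow> frob q n 0 x = x"
  by (auto simp: fun_eq_iff frob_def lin_polys_def)

lemma frob_mod: "(frob q n j :: (nat\<Rightarrow>'a) \<Rightarrow> _) = frob q n (j mod int n)"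
  by (auto simp: fun_eq_iff frob_def mod_diff_right_eq)

lemma frob_comp:
  assumes "(x::nat\<Rightarrow>'a) \<in> lin_polys n"
  shows "frob q n j (frob q n l x) = frob q n (j + l) x"
proof (rule ext)
  fix m
  show "frob q n j (frob q n l x) m = frob q n (j + l) x m"
  proof (cases "m < n")
    case True
    define r where "r = nat ((int m - j) mod int n)"
    have rn: "r < n" using n_ge unfolding r_def by (simp add: nat_less_iff)
    have ri: "int r = (int m - j) mod int n" using n_ge unfolding r_def by simp
    have idx: "(int r - l) mod int n = (int m - (j + l)) mod int n"
      unfolding ri by (simp add: mod_diff_left_eq algebra_simps)
    define j' where "j' = nat (j mod int n)"
    define l' where "l' = nat (l mod int n)"
    have jl: "nat ((j + l) mod int n) = (l' + j') mod n"
    proof -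
      have "(j + l) mod int n = (j mod int n + l mod int n) mod int n" by (simp add: mod_add_eq)
      also have "\<dots> = (int j' + int l') mod int n" using n_ge by (simp add: j'_def l'_def)
      finally show ?thesis by (simp add: nat_mod_as_int add.commute)
    qed
    have "frob q n j (frob q n l x) m = (x (nat ((int r - l) mod int n)) ^ (q ^ l')) ^ (q ^ j')"
      using True rn by (simp add: frob_def r_def[symmetric] j'_def l'_def)
    also have "\<dots> = x (nat ((int r - l) mod int n)) ^ (q ^ (l' + j'))"
      by (simp add: power_mult[symmetric] power_add)
    also have "\<dots> = x (nat ((int r - l) mod int n)) ^ (q ^ ((l' + j') mod n))"
      by (rule pow_q_mod)
    also have "\<dots> = frob q n (j + l) x m"
      using True by (simp add: frob_def idx jl)
    finally show ?thesis .
  next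
    case False
    thus ?thesis by (simp add: frob_def)
  qed
qed

end


interpretation VS: vector_space "cscale :: 'a::field \<Rightarrow> (nat \<Rightarrow> 'a) \<Rightarrow> (nat \<Rightarrow> 'a)"
  by unfold_locales (auto simp: cscale_def fun_eq_iff algebra_simps)

context
  fixes E :: "(nat \<Rightarrow> 'a::field) set"
  assumes finE: "finite E"
begin

lemma G_basis:
  assumes "VS.subspace A" "A \<subseteq> VS.span E"
  obtains B where "B \<subseteq> A" "VS.independent B" "finite B" "VS.span B = A" "card B = VS.dim A"
proof -
  obtain B where B: "B \<subseteq> A" "VS.independent B" "A \<subseteq> VS.span B" "card B = VS.dim A"
    using VS.basis_exists by blast
  have "finite B" using VS.independent_span_bound[OF finE B(2)] B(1) assms(2) by blast
  moreover have "VS.span B = A"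
    using B(1,3) assms(1) VS.span_minimal by blast
  ultimately show ?thesis using that B by blast
qed

lemma G_indep_le:
  assumes "VS.independent I" "I \<subseteq> A" "VS.subspace A" "A \<subseteq> VS.span E"
  shows "finite I \<and> card I \<le> VS.dim A"
proof -
  obtain B where B: "B \<subseteq> A" "VS.independent B" "finite B" "VS.span B = A" "card B = VS.dim A"
    using G_basis assms(3,4) by blast
  show ?thesis using VS.independent_span_bound[OF B(3) assms(1)] assms(2) B by auto
qed

lemma G_dim_mono:
  assumes "A \<subseteq> B" "VS.subspace B" "B \<subseteq> VS.span E"
  shows "VS.dim A \<le> VS.dim B"
proof -
  obtain BB where B: "BB \<subseteq> B" "VS.independent BB" "finite BB" "VS.span BB = B" "card BB = VS.dim B"
    using G_basis assms(2,3) by blast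
  show ?thesis using VS.dim_le_card[of A BB] B assms(1) by auto
qed

lemma G_dim_eq:
  assumes "A \<subseteq> B" "VS.subspace A" "VS.subspace B" "B \<subseteq> VS.span E" "VS.dim B \<le> VS.dim A"
  shows "A = B"
proof (rule ccontr)
  assume "A \<noteq> B"
  then obtain b where b: "b \<in> B" "b \<notin> A" using assms(1) by blast
  have AE: "A \<subseteq> VS.span E" using assms(1,4) by blast
  obtain BA where BA: "BA \<subseteq> A" "VS.independent BA" "finite BA" "VS.span BA = A" "card BA = VS.dim A"
    using G_basis assms(2) AE by blast
  have "VS.independent (insert b BA)"
    using VS.independent_insertI[of b BA] BA b by auto
  moreover have "insert b BA \<subseteq> B" using BA assms(1) b by auto
  ultimately have "card (insert b BA) \<le> VS.dim B" using G_indep_le assms(3,4) by blast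
  moreover have "b \<notin> BA" using BA(1) b(2) by blast
  hence "card (insert b BA) = card BA + 1" using BA(3) by simp
  ultimately show False using BA assms(5) by simp
qed

lemma G_span_card_indep:
  assumes "finite S" "card S \<le> VS.dim (VS.span S)"
  shows "VS.independent S"
proof (rule ccontr)
  assume "\<not> VS.independent S"
  then obtain a where a: "a \<in> S" "a \<in> VS.span (S - {a})" using VS.dependent_def by blast
  have "VS.span S = VS.span (S - {a})"
    using VS.span_redundant[OF a(2)] a(1) by (metis insert_Diff)
  hence "VS.dim (VS.span S) \<le> card (S - {a})"
    using VS.dim_le_card[of "VS.span S" "S - {a}"] assms(1) by auto
  moreover have "card (S - {a}) < card S" using a(1) assms(1) by (meson card_Diff1_less)
  ultimately show False using assms(2) by linarith
qed

end

lemma G_disj: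
  fixes S T :: "(nat \<Rightarrow> 'a::field) set"
  assumes "finite S" "VS.independent (S \<union> T)" "S \<inter> T = {}"
  shows "VS.span S \<inter> VS.span T = {0}"
  using assms
proof (induction S rule: finite_induct)
  case empty
  show ?case using VS.span_zero[of T] unfolding VS.span_empty by blast
next
  case (insert s S)
  have "S \<union> T \<subseteq> insert s S \<union> T" by blast
  hence "VS.independent (S \<union> T)" using insert.prems(1) VS.independent_mono by blast
  moreover have "S \<inter> T = {}" using insert.prems(2) by blast
  ultimately have IH: "VS.span S \<inter> VS.span T = {0}" using insert.IH by blast
  have "v = 0" if v: "v \<in> VS.span (insert s S) \<inter> VS.span T" for v
  proof -
    obtain c where c: "v - cscale c s \<in> VS.span S" using v VS.span_breakdown_eq by blast
    show "v = 0"
    proof (cases "c = 0")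
      case True
      then have "v \<in> VS.span S" using c by simp
      then show ?thesis using IH v by auto
    next
      case False
      have "v \<in> VS.span (S \<union> T)" using v VS.span_mono[of T "S \<union> T"] by auto
      moreover have "v - cscale c s \<in> VS.span (S \<union> T)" using c VS.span_mono[of S "S \<union> T"] by auto
      ultimately have "v - (v - cscale c s) \<in> VS.span (S \<union> T)" by (rule VS.span_diff)
      hence "cscale c s \<in> VS.span (S \<union> T)" by simp
      hence "cscale (inverse c) (cscale c s) \<in> VS.span (S \<union> T)" by (rule VS.span_scale)
      hence "s \<in> VS.span (S \<union> T)" using False by simp
      moreover have "(insert s S \<union> T) - {s} = S \<union> T" using insert by auto
      ultimately have "VS.dependent (insert s S \<union> T)"
        using VS.dependent_def by (metis UnI1 insertI1)
      then show ?thesis using insert by blast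
    qed
  qed
  then show ?case using VS.span_zero[of "insert s S"] VS.span_zero[of T] by blast
qed

lemma G_union:
  fixes S T :: "(nat \<Rightarrow> 'a::field) set"
  assumes "finite T" "VS.independent S" "VS.independent T" "VS.span S \<inter> VS.span T = {0}"
  shows "VS.independent (S \<union> T)"
  using assms(1,3,4)
proof (induction T rule: finite_induct)
  case empty
  then show ?case using assms(2) by simp
next
  case (insert t T0)
  have iT0: "VS.independent T0" using insert(4) VS.independent_mono by blast
  have sp0: "VS.span S \<inter> VS.span T0 = {0}"
    using insert(5) VS.span_mono[of T0 "insert t T0"] VS.span_zero by blast
  have IH: "VS.independent (S \<union> T0)" using insert(3) iT0 sp0 by blast
  have tn: "t \<notin> VS.span T0" using insert(2,4) VS.independent_insert by metis
  have "t \<notin> VS.span (S \<union> T0)"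
  proof
    assume "t \<in> VS.span (S \<union> T0)"
    then obtain x y where xy: "t = x + y" "x \<in> VS.span S" "y \<in> VS.span T0"
      using VS.span_Un by blast
    have "y \<in> VS.span (insert t T0)" using xy(3) VS.span_mono[of T0 "insert t T0"] by auto
    moreover have "t \<in> VS.span (insert t T0)" by (simp add: VS.span_base)
    ultimately have "t - y \<in> VS.span (insert t T0)" using VS.span_diff by blast
    hence "x \<in> VS.span (insert t T0)" using xy(1) by simp
    hence "x = 0" using xy(2) insert(5) by blast
    thus False using xy tn by simp
  qed
  hence "VS.independent (insert t (S \<union> T0))" using VS.independent_insertI IH by blast
  thus ?case by simp
qed


lemma dim_zero_set: "VS.dim {0 :: nat \<Rightarrow> 'a::field} = 0"
  by (metis VS.span_empty VS.dim_span VS.dim_eq_card_independent VS.independent_empty card.empty)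

context
  fixes E :: "(nat \<Rightarrow> 'a::field) set"
  assumes finE: "finite E"
begin

lemma G_grass:
  assumes X: "VS.subspace X" "X \<subseteq> VS.span E" and Y: "VS.subspace Y" "Y \<subseteq> VS.span E"
  shows "VS.dim X + VS.dim Y \<le> VS.dim (VS.span (X \<union> Y)) + VS.dim (X \<inter> Y)"
proof -
  have XY: "VS.subspace (X \<inter> Y)" "X \<inter> Y \<subseteq> VS.span E" using X Y VS.subspace_inter by blast+
  obtain I where I: "I \<subseteq> X \<inter> Y" "VS.independent I" "finite I" "VS.span I = X \<inter> Y" "card I = VS.dim (X \<inter> Y)"
    using G_basis[OF finE XY] by blast
  obtain BX where BX: "I \<subseteq> BX" "BX \<subseteq> X" "VS.independent BX" "X \<subseteq> VS.span BX"
    using VS.maximal_independent_subset_extend[of I X] I by blast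
  have fBX: "finite BX"
    using VS.independent_span_bound[OF finE BX(3)] BX(2) X(2) by blast
  have cBX: "card BX = VS.dim X"
    using VS.basis_card_eq_dim BX by blast
  define J where "J = BX - I"
  have fJ: "finite J" using fBX J_def by simp
  have cJ: "card J = VS.dim X - VS.dim (X \<inter> Y)" using card_Diff_subset[of I BX] I(3,5) BX(1) cBX J_def by simp
  have dXY: "VS.dim (X \<inter> Y) \<le> VS.dim X" using I(5) cBX card_mono[OF fBX BX(1)] by simp
  obtain BY where BY: "BY \<subseteq> Y" "VS.independent BY" "finite BY" "VS.span BY = Y" "card BY = VS.dim Y"
    using G_basis[OF finE Y] by blast
  have JX: "VS.span J \<subseteq> X" using VS.span_minimal[of J X] X(1) BX(2) J_def by blast
  have IJu: "I \<union> J = BX" using BX(1) J_def by blast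
  have IJ: "VS.span I \<inter> VS.span J = {0}"
    using G_disj[of I J] I(3) BX(3) IJu J_def by blast
  have JBY: "VS.span BY \<inter> VS.span J = {0}"
  proof -
    have "v = 0" if "v \<in> VS.span BY" "v \<in> VS.span J" for v
    proof -
      have "v \<in> X \<inter> Y" using that JX BY(4) by blast
      hence "v \<in> VS.span I" using I(4) by simp
      thus ?thesis using IJ that(2) by blast
    qed
    thus ?thesis using VS.span_zero[of BY] VS.span_zero[of J] by blast
  qed
  have iJ: "VS.independent J" using BX(3) J_def VS.independent_mono by blast
  have ind: "VS.independent (BY \<union> J)" using G_union[OF fJ BY(2) iJ JBY] .
  have disj: "BY \<inter> J = {}"
  proof -
    have "x = 0" if "x \<in> BY" "x \<in> J" for x using JBY that VS.span_base by blast
    moreover have "0 \<notin> BY" using BY(2) VS.dependent_zero by blast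
    ultimately show ?thesis by blast
  qed
  have card: "card (BY \<union> J) = VS.dim Y + card J" using card_Un_disjoint[OF BY(3) fJ disj] BY(5) by simp
  have sub: "BY \<union> J \<subseteq> VS.span (X \<union> Y)" using BY(1) J_def BX(2) VS.span_superset by blast
  have spE: "VS.span (X \<union> Y) \<subseteq> VS.span E"
    using X(2) Y(2) VS.span_mono[of "X \<union> Y" "VS.span E"] VS.span_span[of E] by auto
  have "card (BY \<union> J) \<le> VS.dim (VS.span (X \<union> Y))"
    using G_indep_le[OF finE ind sub VS.subspace_span spE] by blast
  thus ?thesis using card cJ dXY by linarith
qed

lemma G_dim_insert:
  assumes "VS.span S \<subseteq> VS.span E" "g \<in> VS.span E" "g \<notin> VS.span S"
  shows "VS.dim (VS.span S) + 1 \<le> VS.dim (VS.span (insert g S))"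
proof -
  obtain B where B: "B \<subseteq> VS.span S" "VS.independent B" "finite B" "VS.span B = VS.span S"
      "card B = VS.dim (VS.span S)"
    using G_basis[OF finE VS.subspace_span assms(1)] by blast
  have gB: "g \<notin> B" using assms(3) B(1) by blast
  have "VS.independent (insert g B)" using VS.independent_insertI[of g B] B(2,4) assms(3) by simp
  moreover have "insert g B \<subseteq> VS.span (insert g S)"
    using B(1) VS.span_mono[of S "insert g S"] VS.span_base[of g "insert g S"] by blast
  moreover have "VS.span (insert g S) \<subseteq> VS.span E"
  proof -
    have "insert g S \<subseteq> VS.span E" using assms(1,2) VS.span_superset[of S] by blast
    thus ?thesis using VS.span_mono VS.span_span by metis
  qed
  ultimately have "card (insert g B) \<le> VS.dim (VS.span (insert g S))"
    using G_indep_le[OF finE] VS.subspace_span by blast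
  thus ?thesis using gB B(3,5) by simp
qed

lemma G_dim0:
  assumes "VS.subspace A" "A \<subseteq> VS.span E" "VS.dim A = 0"
  shows "A = {0}"
proof -
  obtain B where B: "B \<subseteq> A" "VS.independent B" "finite B" "VS.span B = A" "card B = VS.dim A"
    using G_basis[OF finE assms(1,2)] by blast
  hence "B = {}" using assms(3) by simp
  thus ?thesis using B(4) by simp
qed

lemma G_dim1:
  assumes "VS.subspace A" "A \<subseteq> VS.span E" "VS.dim A = 1"
  obtains h where "A = VS.span {h}"
proof -
  obtain B where B: "B \<subseteq> A" "VS.independent B" "finite B" "VS.span B = A" "card B = VS.dim A"
    using G_basis[OF finE assms(1,2)] by blast
  then obtain h where "B = {h}" using assms(3) card_1_singletonE by metis
  thus ?thesis using that B(4) by blast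
qed

lemma G_dim2:
  assumes "VS.subspace A" "A \<subseteq> VS.span E" "VS.dim A = 2"
  obtains h g where "A = VS.span {h, g}"
proof -
  obtain B where B: "B \<subseteq> A" "VS.independent B" "finite B" "VS.span B = A" "card B = VS.dim A"
    using G_basis[OF finE assms(1,2)] by blast
  then obtain h g where "B = {h, g}" using assms(3) card_2_iff by metis
  thus ?thesis using that B(4) by blast
qed

end


lemma seq_lemma:
  fixes d :: "nat \<Rightarrow> nat" and k :: nat
  assumes d0: "d 0 = k" and d1: "d 1 + 2 = k" and k3: "k > 2"
    and mono: "\<And>m. d (Suc m) \<le> d m"
    and drop: "\<And>m. 2 * d (Suc m) \<le> d m + d (Suc (Suc m))"
    and strict: "\<And>m. d (Suc m) = d m \<Longrightarrow> d m = 0"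
  obtains a where "a \<ge> 1" "2 * a \<le> k" "\<And>m. m \<le> a \<Longrightarrow> d m + 2 * m = k"
    "\<And>m. a \<le> m \<Longrightarrow> m \<le> k - a \<Longrightarrow> d m + a + m = k"
    "a = 1 \<longleftrightarrow> d 2 + 3 = k"
proof -
  define \<delta> where "\<delta> m = d m - d (Suc m)" for m
  have anti: "\<delta> (Suc m) \<le> \<delta> m" for m
    using drop[of m] mono[of m] mono[of "Suc m"] unfolding \<delta>_def by linarith
  have anti2: "\<delta> (m + i) \<le> \<delta> m" for m i
  proof (induction i)
    case (Suc i) show ?case using anti[of "m + i"] Suc by simp
  qed simp
  have dl0: "\<delta> 0 = 2" using d0 d1 unfolding \<delta>_def by simp
  have le2: "\<delta> m \<le> 2" for m using anti2[of 0 m] dl0 by simp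
  have ex: "\<exists>m. \<delta> m \<noteq> 2"
  proof (rule ccontr)
    assume "\<not> (\<exists>m. \<delta> m \<noteq> 2)"
    hence all: "\<delta> m = 2" for m by blast
    have "d m + 2 * m = k" for m
    proof (induction m)
      case 0 then show ?case using d0 by simp
    next
      case (Suc m) then show ?case using all[of m] mono[of m] unfolding \<delta>_def by simp
    qed
    from this[of k] show False using k3 by simp
  qed
  define a where "a = (LEAST m. \<delta> m \<noteq> 2)"
  have da: "\<delta> a \<noteq> 2" unfolding a_def by (rule LeastI_ex[OF ex])
  have below: "m < a \<Longrightarrow> \<delta> m = 2" for m unfolding a_def using not_less_Least by blast
  have a1: "a \<ge> 1" using da dl0 by (cases a) auto
  have P1: "d m + 2 * m = k" if "m \<le> a" for m
    using that
  proof (induction m)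
    case 0 then show ?case using d0 by simp
  next
    case (Suc m) then show ?case using below[of m] mono[of m] unfolding \<delta>_def by simp
  qed
  have ka: "2 * a \<le> k" using P1[of a] by simp
  have dla: "\<delta> a \<le> 1" using le2[of a] da by simp
  have P2: "d (a + i) + a + (a + i) = k" if "a + i \<le> k - a" for i
    using that
  proof (induction i)
    case 0 then show ?case using P1[of a] by simp
  next
    case (Suc i)
    have IH: "d (a + i) + a + (a + i) = k" using Suc by simp
    have pos: "d (a + i) > 0" using IH Suc.prems by simp
    have "\<delta> (a + i) \<le> 1" using anti2[of a i] dla by simp
    moreover have "d (Suc (a + i)) \<noteq> d (a + i)" using strict pos by force
    ultimately have "d (Suc (a + i)) + 1 = d (a + i)"
      using mono[of "a + i"] unfolding \<delta>_def by linarith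
    then show ?case using IH by simp
  qed
  have P2': "d m + a + m = k" if "a \<le> m" "m \<le> k - a" for m
    using P2[of "m - a"] that by simp
  have "a = 1 \<longleftrightarrow> d 2 + 3 = k"
  proof
    assume "a = 1"
    moreover have "2 \<le> k - a" using k3 \<open>a = 1\<close> by simp
    ultimately show "d 2 + 3 = k" using P2'[of 2] by simp
  next
    assume h: "d 2 + 3 = k"
    show "a = 1"
    proof (rule ccontr)
      assume "a \<noteq> 1" hence "2 \<le> a" using a1 by simp
      thus False using P1[of 2] h by simp
    qed
  qed
  thus ?thesis using that a1 ka P1 P2' by blast
qed

lemma idx1:
  fixes n a :: nat and s :: int
  assumes "a < n"
  shows "nat ((int ((a + nat (s mod int n)) mod n) - s) mod int n) = a"
proof -
  have n0: "n > 0" using assms by simp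
  have "int ((a + nat (s mod int n)) mod n) = (int a + s mod int n) mod int n"
    using n0 by (simp add: of_nat_mod)
  hence "(int ((a + nat (s mod int n)) mod n) - s) mod int n = ((int a + s mod int n) mod int n - s) mod int n" by simp
  also have "\<dots> = (int a + s mod int n - s) mod int n" by (simp add: mod_diff_left_eq)
  also have "\<dots> = (int a + (s mod int n - s)) mod int n" by (simp add: algebra_simps)
  also have "\<dots> = (int a + (s mod int n - s) mod int n) mod int n" by (simp add: mod_add_right_eq)
  also have "(s mod int n - s) mod int n = 0" by (simp add: mod_diff_left_eq)
  also have "(int a + 0) mod int n = int a" using assms by simp
  finally show ?thesis by simp
qed

lemma idx2:
  fixes n b :: nat and s :: int
  assumes "b < n"
  shows "(nat ((int b - s) mod int n) + nat (s mod int n)) mod n = b"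
proof -
  have n0: "n > 0" using assms by simp
  have "int ((nat ((int b - s) mod int n) + nat (s mod int n)) mod n) = ((int b - s) mod int n + s mod int n) mod int n"
    using n0 by (simp add: of_nat_mod)
  also have "\<dots> = ((int b - s) + s) mod int n" by (simp add: mod_add_eq)
  also have "\<dots> = int b" using assms by simp
  finally show ?thesis by linarith
qed


lemma sum_fun_apply: "(sum f A :: 'b \<Rightarrow> 'c::comm_monoid_add) x = (\<Sum>a\<in>A. f a x)"
  by (induction A rule: infinite_finite_induct) auto

definition Ebas :: "nat \<Rightarrow> (nat \<Rightarrow> 'a::field) set" where
  "Ebas n = (\<lambda>i. \<lambda>m. if m = i then 1 else 0) ` {..<n}"

lemma finite_Ebas: "finite (Ebas n)" by (simp add: Ebas_def)

lemma L_span: "lin_polys n \<subseteq> VS.span (Ebas n :: (nat \<Rightarrow> 'a::field) set)"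
proof
  fix a :: "nat \<Rightarrow> 'a" assume a: "a \<in> lin_polys n"
  have eq: "a = (\<Sum>i<n. cscale (a i) (\<lambda>m. if m = i then 1 else 0))"
  proof (rule ext)
    fix m
    have "(\<Sum>i<n. cscale (a i) (\<lambda>m. if m = i then 1 else 0)) m = (\<Sum>i<n. if i = m then a i else 0)"
    proof -
      have "\<And>i. a i * (if m = i then 1 else 0) = (if i = m then a i else 0)" by simp
      thus ?thesis by (simp only: sum_fun_apply cscale_def)
    qed
    also have "\<dots> = a m" using a by (cases "m < n") (simp_all add: lin_polys_def)
    finally show "a m = (\<Sum>i<n. cscale (a i) (\<lambda>m. if m = i then 1 else 0)) m" by simp
  qed
  have "(\<Sum>i<n. cscale (a i) (\<lambda>m. if m = i then 1 else 0)) \<in> VS.span (Ebas n)"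
    by (intro VS.span_sum VS.span_scale VS.span_base) (auto simp: Ebas_def)
  thus "a \<in> VS.span (Ebas n)" unfolding eq[symmetric] .
qed

lemma L_sub: "VS.subspace (lin_polys n :: (nat \<Rightarrow> 'a::field) set)"
  by (rule VS.subspaceI) (auto simp: lin_polys_def cscale_def)

context fsetup
begin

abbreviation sg :: "nat \<Rightarrow> (nat \<Rightarrow> 'a) \<Rightarrow> (nat \<Rightarrow> 'a)" where
  "sg t \<equiv> frob q n (s * int t)"

abbreviation LL :: "(nat \<Rightarrow> 'a) set" where "LL \<equiv> lin_polys n"

abbreviation EE :: "(nat \<Rightarrow> 'a) set" where "EE \<equiv> Ebas n"

lemma sg_L: "sg t x \<in> LL" by (rule frob_L)

lemma sg0: "x \<in> LL \<Longrightarrow> sg 0 x = x" by (simp add: frob_0)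

lemma sg_Suc: "x \<in> LL \<Longrightarrow> sg 1 (sg t x) = sg (Suc t) x"
  by (simp add: frob_comp algebra_simps)

lemma sg_Suc': "x \<in> LL \<Longrightarrow> sg t (sg 1 x) = sg (Suc t) x"
  by (simp add: frob_comp algebra_simps)

lemma sg_n: "x \<in> LL \<Longrightarrow> sg n x = x"
proof -
  assume x: "x \<in> LL"
  have "sg n x = frob q n ((s * int n) mod int n) x" by (metis frob_mod)
  also have "\<dots> = x" using x by (simp add: frob_0)
  finally show ?thesis .
qed

lemma sg_inj: "inj_on (sg 1) LL"
proof (rule inj_onI)
  fix x y assume xy: "x \<in> LL" "y \<in> LL" "sg 1 x = sg 1 y"
  have nn: "Suc (n - 1) = n" using n_ge by simp
  have "sg (n - 1) (sg 1 x) = sg n x" using sg_Suc'[OF xy(1), of "n - 1"] unfolding nn .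
  moreover have "sg (n - 1) (sg 1 y) = sg n y" using sg_Suc'[OF xy(2), of "n - 1"] unfolding nn .
  ultimately show "x = y" using xy(3) sg_n[OF xy(1)] sg_n[OF xy(2)] by metis
qed

lemma frob_span: "frob q n j ` VS.span (B :: (nat \<Rightarrow> 'a) set) \<subseteq> VS.span (frob q n j ` B)"
proof
  fix y assume "y \<in> frob q n j ` VS.span B"
  then obtain x where x: "x \<in> VS.span B" "y = frob q n j x" by blast
  have "frob q n j x \<in> VS.span (frob q n j ` B)"
    using x(1)
  proof (induction rule: VS.span_induct)
    case base
    let ?S = "VS.span (frob q n j ` B)"
    have s0: "frob q n j 0 \<in> ?S" by (simp only: frob_zero VS.span_zero)
    have sa: "\<And>x y. frob q n j x \<in> ?S \<Longrightarrow> frob q n j y \<in> ?S \<Longrightarrow> frob q n j (x + y) \<in> ?S"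
      by (simp only: frob_add) (rule VS.span_add)
    have ss: "\<And>c x. frob q n j x \<in> ?S \<Longrightarrow> frob q n j (cscale c x) \<in> ?S"
      by (simp only: frob_scale) (rule VS.span_scale)
    show ?case
      by (rule VS.subspaceI) (simp only: mem_Collect_eq; use s0 sa ss in blast)+
  next
    case (step x) thus ?case by (simp add: VS.span_base)
  qed
  thus "y \<in> VS.span (frob q n j ` B)" using x by simp
qed

lemma frob_img_sub:
  assumes "VS.subspace (U :: (nat \<Rightarrow> 'a) set)"
  shows "VS.subspace (frob q n j ` U)"
proof (rule VS.subspaceI)
  show "0 \<in> frob q n j ` U" using VS.subspace_0[OF assms] frob_zero by (metis image_eqI)
next
  fix x y assume "x \<in> frob q n j ` U" "y \<in> frob q n j ` U"
  then obtain x' y' where "x' \<in> U" "y' \<in> U" "x = frob q n j x'" "y = frob q n j y'" by blast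
  thus "x + y \<in> frob q n j ` U" using VS.subspace_add[OF assms] frob_add by (metis image_eqI)
next
  fix c :: 'a and x assume "x \<in> frob q n j ` U"
  then obtain x' where x': "x' \<in> U" "x = frob q n j x'" by blast
  define j' where "j' = nat (j mod int n)"
  have "j mod int n < int n" using n_ge by simp
  hence j'n: "j' \<le> n" unfolding j'_def nat_le_iff by linarith
  define c' where "c' = c ^ (q ^ (n - j'))"
  have "c' ^ (q ^ j') = c ^ (q ^ (n - j') * q ^ j')" by (simp add: c'_def power_mult)
  also have "\<dots> = c ^ (q ^ n)" using j'n by (simp add: power_add[symmetric])
  also have "\<dots> = c" by (rule pow_qn)
  finally have "c' ^ (q ^ j') = c" .
  hence "cscale c x = frob q n j (cscale c' x')" using x' by (simp add: frob_scale j'_def)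
  thus "cscale c x \<in> frob q n j ` U" using VS.subspace_scale[OF assms x'(1)] by blast
qed

lemma frob_dim_le:
  assumes "VS.subspace U" "U \<subseteq> LL"
  shows "VS.dim (frob q n j ` U) \<le> VS.dim U"
proof -
  obtain B where B: "B \<subseteq> U" "VS.independent B" "finite B" "VS.span B = U" "card B = VS.dim U"
    using G_basis[OF finite_Ebas assms(1)] assms(2) L_span by blast
  have "frob q n j ` U \<subseteq> VS.span (frob q n j ` B)" using frob_span[of j B] B(4) by simp
  hence "VS.dim (frob q n j ` U) \<le> card (frob q n j ` B)" using VS.dim_le_card B(3) by blast
  also have "\<dots> \<le> card B" using B(3) card_image_le by blast
  finally show ?thesis using B(5) by simp
qed

lemma sg_dim:
  assumes "VS.subspace U" "U \<subseteq> LL"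
  shows "VS.dim (sg 1 ` U) = VS.dim U"
proof (rule antisym)
  show "VS.dim (sg 1 ` U) \<le> VS.dim U" by (rule frob_dim_le[OF assms])
next
  have "sg (n - 1) ` (sg 1 ` U) = U"
  proof -
    have "sg (n - 1) (sg 1 x) = x" if "x \<in> U" for x
    proof -
      have nn: "Suc (n - 1) = n" using n_ge by simp
      have xL: "x \<in> LL" using that assms(2) by blast
      show ?thesis using sg_Suc'[OF xL, of "n - 1"] sg_n[OF xL] unfolding nn by (rule trans)
    qed
    thus ?thesis by (simp add: image_image)
  qed
  moreover have "VS.dim (sg (n - 1) ` (sg 1 ` U)) \<le> VS.dim (sg 1 ` U)"
    using frob_dim_le[OF frob_img_sub[OF assms(1)]] frob_L by blast
  ultimately show "VS.dim U \<le> VS.dim (sg 1 ` U)" by simp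
qed

end


locale csetup = fsetup +
  assumes C_L: "C \<subseteq> lin_polys n" and C_sub: "VS.subspace C" and C_U1: "C \<inter> U1 q n = {0}"
begin

lemma lin_eval_frob:
  assumes f: "f \<in> LL"
  shows "lin_eval q n f x ^ (q ^ nat (s mod int n)) = lin_eval q n (frob q n s f) x"
proof -
  define j' where "j' = nat (s mod int n)"
  have "lin_eval q n f x ^ (q ^ j') = (\<Sum>i<n. (f i * x ^ (q ^ i)) ^ (q ^ j'))"
    unfolding lin_eval_def by (rule fresh_sum)
  also have "\<dots> = (\<Sum>i<n. f i ^ (q ^ j') * x ^ (q ^ ((i + j') mod n)))"
  proof (rule sum.cong[OF refl])
    fix i
    have "(x ^ (q ^ i)) ^ (q ^ j') = x ^ (q ^ (i + j'))" by (simp add: power_mult[symmetric] power_add)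
    also have "\<dots> = x ^ (q ^ ((i + j') mod n))" by (rule pow_q_mod)
    finally show "(f i * x ^ (q ^ i)) ^ (q ^ j') = f i ^ (q ^ j') * x ^ (q ^ ((i + j') mod n))"
      by (simp add: power_mult_distrib)
  qed
  also have "\<dots> = (\<Sum>m<n. frob q n s f m * x ^ (q ^ m))"
  proof (rule sum.reindex_bij_witness[where j = "\<lambda>i. (i + j') mod n" and i = "\<lambda>m. nat ((int m - s) mod int n)"])
    fix a assume a: "a \<in> {..<n}"
    show "nat ((int ((a + j') mod n) - s) mod int n) = a" using idx1[of a n s] a j'_def by simp
    show "(a + j') mod n \<in> {..<n}" using n_ge by simp
    show "frob q n s f ((a + j') mod n) * x ^ (q ^ ((a + j') mod n)) = f a ^ (q ^ j') * x ^ (q ^ ((a + j') mod n))"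
      using n_ge idx1[of a n s] a by (simp add: frob_def j'_def)
  next
    fix b assume b: "b \<in> {..<n}"
    show "(nat ((int b - s) mod int n) + j') mod n = b" using idx2[of b n s] b j'_def by simp
    show "nat ((int b - s) mod int n) \<in> {..<n}" using n_ge by (simp add: nat_less_iff)
  qed
  finally show ?thesis unfolding lin_eval_def j'_def .
qed

lemma fixed_rank:
  assumes f: "f \<in> LL" and fx: "frob q n s f = f"
  shows "f \<in> U1 q n"
proof -
  define j' where "j' = nat (s mod int n)"
  have n0: "int n \<noteq> 0" using n_ge by simp
  have "coprime s (int n)" using gcd_sn by (simp add: coprime_iff_gcd_eq_1)
  hence "coprime (s mod int n) (int n)" using n0 by simp
  hence "coprime (int j') (int n)" using n_ge by (simp add: j'_def)
  hence cop: "coprime j' n" by simp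
  obtain u where u: "[j' * u = Suc 0] (mod n)" using cong_solve_coprime_nat[OF cop] by blast
  hence umod: "(j' * u) mod n = 1 mod n" by (simp add: cong_def)
  have "\<exists>c\<in>subfield_q q. lin_eval q n f x = c * 1" for x
  proof -
    define y where "y = lin_eval q n f x"
    have yQ: "y ^ (q ^ j') = y" using lin_eval_frob[OF f, of x] fx by (simp add: y_def j'_def)
    have pu: "y ^ (q ^ (j' * v)) = y" for v
    proof (induction v)
      case (Suc v)
      have "y ^ (q ^ (j' * Suc v)) = (y ^ (q ^ (j' * v))) ^ (q ^ j')"
        by (simp add: power_mult[symmetric] power_add[symmetric] mult.commute)
      thus ?case using Suc yQ by simp
    qed simp
    have "y ^ q = y ^ (q ^ 1)" by simp
    also have "\<dots> = y ^ (q ^ (1 mod n))" by (rule pow_q_mod)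
    also have "\<dots> = y ^ (q ^ ((j' * u) mod n))" using umod by simp
    also have "\<dots> = y ^ (q ^ (j' * u))" by (rule pow_q_mod[symmetric])
    also have "\<dots> = y" by (rule pu)
    finally have "y \<in> subfield_q q" by (simp add: subfield_q_def)
    thus ?thesis unfolding y_def by (intro bexI[of _ "lin_eval q n f x"]) simp_all
  qed
  hence "rank_le_one q n f" unfolding rank_le_one_def by (intro exI[of _ 1]) blast
  thus ?thesis using f by (simp add: U1_def)
qed

lemma qpow1: "q ^ k = 1 \<longleftrightarrow> k = 0"
  using q_ge2 by simp

lemma galois:
  assumes U: "VS.subspace U" "U \<subseteq> C" "sg 1 ` U \<subseteq> U"
  shows "U = {0}"
proof (rule ccontr)
  assume "U \<noteq> {0}"
  then obtain u where u: "u \<in> U" "u \<noteq> 0" using VS.subspace_0[OF U(1)] by blast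
  have uL: "u \<in> LL" using u U(2) C_L by blast
  obtain m0 where m0: "u m0 \<noteq> 0" using u(2) by (auto simp: fun_eq_iff)
  have m0n: "m0 < n" using m0 uL by (auto simp: lin_polys_def not_less[symmetric])
  have sgU: "sg t x \<in> U" if "x \<in> U" for x t
  proof (induction t)
    case 0 thus ?case using that U(2) C_L frob_0 by auto
  next
    case (Suc t)
    have xL: "x \<in> LL" using that U(2) C_L by blast
    have "sg (Suc t) x = sg 1 (sg t x)" using sg_Suc[OF xL] by simp
    thus ?case using Suc U(3) by auto
  qed
  define T where "T lam = (\<Sum>i<n. sg i (cscale lam u))" for lam
  have TU: "T lam \<in> U" for lam
    unfolding T_def by (intro VS.subspace_sum[OF U(1)] sgU VS.subspace_scale[OF U(1) u(1)])
  have Tfix: "frob q n s (T lam) = T lam" for lam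
  proof -
    have lu: "cscale lam u \<in> LL" using VS.subspace_scale[OF L_sub uL] .
    have "sg 1 (T lam) = (\<Sum>i<n. sg 1 (sg i (cscale lam u)))" unfolding T_def by (rule frob_sum)
    also have "\<dots> = (\<Sum>i<n. sg (Suc i) (cscale lam u))" using sg_Suc[OF lu] by simp
    also have "\<dots> = T lam"
    proof -
      have "(\<Sum>i<Suc n. sg i (cscale lam u)) = sg 0 (cscale lam u) + (\<Sum>i<n. sg (Suc i) (cscale lam u))"
        by (rule sum.lessThan_Suc_shift)
      moreover have "(\<Sum>i<Suc n. sg i (cscale lam u)) = T lam + sg n (cscale lam u)"
        by (simp add: T_def)
      moreover have "sg 0 (cscale lam u) = cscale lam u" using frob_0[OF lu] by simp
      moreover have "sg n (cscale lam u) = cscale lam u" using sg_n[OF lu] .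
      ultimately show ?thesis by (metis add.commute add_right_cancel)
    qed
    finally show ?thesis by simp
  qed
  show False
  proof (cases "\<exists>lam. T lam \<noteq> 0")
    case True
    then obtain lam where lam: "T lam \<noteq> 0" by blast
    have TC: "T lam \<in> C" using TU U(2) by blast
    hence "T lam \<in> U1 q n" using fixed_rank[of "T lam"] Tfix C_L by blast
    thus False using TC lam C_U1 by blast
  next
    case False
    hence T0: "T lam = 0" for lam by blast
    define e where "e i = q ^ nat ((s * int i) mod int n)" for i
    define c where "c i = u (nat ((int m0 - s * int i) mod int n)) ^ e i" for i
    have Tm0: "T lam m0 = (\<Sum>i<n. c i * lam ^ e i)" for lam
      unfolding T_def sum_fun_apply using m0n
      by (simp add: frob_def cscale_def c_def e_def power_mult_distrib mult.commute)
    define P where "P = (\<Sum>i<n. monom (c i) (e i))"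
    have polyP: "poly P lam = 0" for lam
    proof -
      have "poly P lam = (\<Sum>i<n. c i * lam ^ e i)" by (simp add: P_def poly_sum poly_monom)
      also have "\<dots> = T lam m0" using Tm0 by simp
      also have "\<dots> = 0" using T0 by simp
      finally show ?thesis .
    qed
    have e_one: "e i = 1 \<longleftrightarrow> i = 0" if "i < n" for i
    proof
      assume "e i = 1"
      hence "nat ((s * int i) mod int n) = 0" unfolding e_def using q_ge2 by simp
      hence "(s * int i) mod int n \<le> 0" by simp
      moreover have "0 \<le> (s * int i) mod int n" using n_ge by simp
      ultimately have "(s * int i) mod int n = 0" by linarith
      hence "int n dvd s * int i" by (simp add: mod_eq_0_iff_dvd)
      moreover have "coprime (int n) s" using gcd_sn by (simp add: coprime_iff_gcd_eq_1 gcd.commute)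
      ultimately have "int n dvd int i" using coprime_dvd_mult_right_iff by blast
      hence "n dvd i" by simp
      thus "i = 0" using that by (metis dvd_imp_le not_less neq0_conv)
    next
      assume "i = 0" thus "e i = 1" by (simp add: e_def)
    qed
    have c0: "c 0 = u m0" using m0n by (simp add: c_def e_def)
    have coeffP: "coeff P 1 = u m0"
    proof -
      have "coeff P 1 = (\<Sum>i<n. if e i = 1 then c i else 0)" by (simp add: P_def coeff_sum)
      also have "\<dots> = (\<Sum>i<n. if i = 0 then c i else 0)" using e_one by (intro sum.cong) auto
      also have "\<dots> = c 0" using n_ge by simp
      finally show ?thesis using c0 by simp
    qed
    hence P0: "P \<noteq> 0" using m0 by auto
    have degP: "degree P \<le> q ^ (n - 1)"
      unfolding P_def
    proof (rule degree_sum_le)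
      fix i assume "i \<in> {..<n}"
      have "nat ((s * int i) mod int n) \<le> n - 1"
      proof -
        have "(s * int i) mod int n < int n" using n_ge by simp
        thus ?thesis by linarith
      qed
      hence "e i \<le> q ^ (n - 1)" unfolding e_def using q_ge2 by (intro power_increasing) auto
      thus "degree (monom (c i) (e i)) \<le> q ^ (n - 1)" using degree_monom_le order_trans by blast
    qed simp
    have "card {x. poly P x = 0} \<le> degree P" by (rule card_poly_roots_bound[OF P0])
    moreover have "{x. poly P x = 0} = (UNIV :: 'a set)" using polyP by blast
    ultimately have "q ^ n \<le> q ^ (n - 1)" using card_a degP by simp
    moreover have "q ^ (n - 1) < q ^ n" using q_ge2 n_ge by (intro power_strict_increasing) auto
    ultimately show False by simp
  qed
qed

end


context csetup
begin

definition Cm :: "nat \<Rightarrow> (nat \<Rightarrow> 'a) set" where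
  "Cm m = {x \<in> lin_polys n. \<forall>t\<le>m. sg t x \<in> C}"

abbreviation dd :: "nat \<Rightarrow> nat" where "dd m \<equiv> VS.dim (Cm m)"

lemma Cm_sub: "VS.subspace (Cm m)"
proof (rule VS.subspaceI)
  show "0 \<in> Cm m" unfolding Cm_def
    using VS.subspace_0[OF L_sub] VS.subspace_0[OF C_sub] frob_zero by simp
next
  fix x y assume "x \<in> Cm m" "y \<in> Cm m"
  thus "x + y \<in> Cm m" unfolding Cm_def
    by (auto simp: frob_add intro: VS.subspace_add[OF L_sub] VS.subspace_add[OF C_sub])
next
  fix c :: 'a and x assume "x \<in> Cm m"
  thus "cscale c x \<in> Cm m" unfolding Cm_def
    by (auto simp: frob_scale intro: VS.subspace_scale[OF L_sub] VS.subspace_scale[OF C_sub])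
qed

lemma Cm_L: "Cm m \<subseteq> LL" unfolding Cm_def by blast

lemma Cm_E: "Cm m \<subseteq> VS.span EE" using Cm_L L_span by blast

lemma Cm_C: "Cm m \<subseteq> C" unfolding Cm_def using frob_0 by fastforce

lemma Cm0: "Cm 0 = C" unfolding Cm_def using frob_0 C_L by auto

lemma Cm_mono: "Cm (Suc m) \<subseteq> Cm m" unfolding Cm_def by auto

lemma Cm_anti: "m \<le> m' \<Longrightarrow> Cm m' \<subseteq> Cm m" unfolding Cm_def by auto

lemma Cm_int: "Cm m \<inter> sg 1 ` Cm m = sg 1 ` Cm (Suc m)"
proof
  show "Cm m \<inter> sg 1 ` Cm m \<subseteq> sg 1 ` Cm (Suc m)"
  proof
    fix x assume "x \<in> Cm m \<inter> sg 1 ` Cm m"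
    then obtain y where x: "x \<in> Cm m" and y: "y \<in> Cm m" "x = sg 1 y" by blast
    have yL: "y \<in> LL" using y Cm_L by blast
    have "sg t y \<in> C" if "t \<le> Suc m" for t
    proof (cases "t \<le> m")
      case True thus ?thesis using y unfolding Cm_def by blast
    next
      case False
      hence t: "t = Suc m" using that by simp
      have "sg (Suc m) y = sg m (sg 1 y)" using sg_Suc'[OF yL] by simp
      thus ?thesis using t x y(2) unfolding Cm_def by auto
    qed
    hence "y \<in> Cm (Suc m)" using yL unfolding Cm_def by blast
    thus "x \<in> sg 1 ` Cm (Suc m)" using y(2) by blast
  qed
next
  show "sg 1 ` Cm (Suc m) \<subseteq> Cm m \<inter> sg 1 ` Cm m"
  proof
    fix x assume "x \<in> sg 1 ` Cm (Suc m)"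
    then obtain y where y: "y \<in> Cm (Suc m)" "x = sg 1 y" by blast
    have yL: "y \<in> LL" using y Cm_L by blast
    have "sg t x \<in> C" if "t \<le> m" for t
    proof -
      have "sg t x = sg (Suc t) y" using sg_Suc'[OF yL] y(2) by simp
      thus ?thesis using y(1) that unfolding Cm_def by auto
    qed
    hence "x \<in> Cm m" using sg_L y(2) unfolding Cm_def by blast
    moreover have "x \<in> sg 1 ` Cm m" using y Cm_mono by blast
    ultimately show "x \<in> Cm m \<inter> sg 1 ` Cm m" by blast
  qed
qed

lemma Cm_img: "sg 1 ` Cm (Suc m) \<subseteq> Cm m" using Cm_int by blast

lemma img_sub: "VS.subspace (sg 1 ` Cm m)" by (rule frob_img_sub[OF Cm_sub])

lemma img_E: "sg 1 ` Cm m \<subseteq> VS.span EE" using sg_L L_span by blast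

lemma dim_img: "VS.dim (sg 1 ` Cm m) = dd m" by (rule sg_dim[OF Cm_sub Cm_L])

lemma d_mono: "dd (Suc m) \<le> dd m"
  by (rule G_dim_mono[OF finite_Ebas Cm_mono Cm_sub Cm_E])

lemma grass_step:
  "2 * dd (Suc m) \<le> VS.dim (VS.span (Cm (Suc m) \<union> sg 1 ` Cm (Suc m))) + dd (Suc (Suc m))"
proof -
  have "dd (Suc m) + VS.dim (sg 1 ` Cm (Suc m))
      \<le> VS.dim (VS.span (Cm (Suc m) \<union> sg 1 ` Cm (Suc m))) + VS.dim (Cm (Suc m) \<inter> sg 1 ` Cm (Suc m))"
    by (rule G_grass[OF finite_Ebas Cm_sub Cm_E img_sub img_E])
  thus ?thesis unfolding Cm_int dim_img by simp
qed

lemma span_XY: "VS.span (Cm (Suc m) \<union> sg 1 ` Cm (Suc m)) \<subseteq> Cm m"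
  using Cm_mono Cm_img by (intro VS.span_minimal[OF _ Cm_sub]) blast

lemma d_drop: "2 * dd (Suc m) \<le> dd m + dd (Suc (Suc m))"
proof -
  have "VS.dim (VS.span (Cm (Suc m) \<union> sg 1 ` Cm (Suc m))) \<le> dd m"
    by (rule G_dim_mono[OF finite_Ebas span_XY Cm_sub Cm_E])
  thus ?thesis using grass_step[of m] by simp
qed

lemma d_strict: "dd (Suc m) = dd m \<Longrightarrow> dd m = 0"
proof -
  assume eq: "dd (Suc m) = dd m"
  have "Cm (Suc m) = Cm m"
    by (rule G_dim_eq[OF finite_Ebas Cm_mono Cm_sub Cm_sub Cm_E]) (use eq in simp)
  hence "sg 1 ` Cm m \<subseteq> Cm m" using Cm_img[of m] by simp
  hence "Cm m = {0}" by (rule galois[OF Cm_sub Cm_C])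
  thus "dd m = 0" using dim_zero_set by simp
qed

lemma step_ineq:
  assumes S: "Cm (Suc m) = VS.span S"
  shows "VS.span (S \<union> sg 1 ` S) \<subseteq> Cm m"
    and "2 * dd (Suc m) \<le> VS.dim (VS.span (S \<union> sg 1 ` S)) + dd (Suc (Suc m))"
proof -
  have SX: "S \<subseteq> Cm (Suc m)" using S VS.span_superset by blast
  show sub: "VS.span (S \<union> sg 1 ` S) \<subseteq> Cm m"
    using SX Cm_mono Cm_img by (intro VS.span_minimal[OF _ Cm_sub]) blast
  have "Cm (Suc m) \<subseteq> VS.span (S \<union> sg 1 ` S)" using S VS.span_mono[of S "S \<union> sg 1 ` S"] by auto
  moreover have "sg 1 ` Cm (Suc m) \<subseteq> VS.span (S \<union> sg 1 ` S)"
    using S frob_span[of "s * int 1" S] VS.span_mono[of "sg 1 ` S" "S \<union> sg 1 ` S"] by auto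
  ultimately have "VS.span (Cm (Suc m) \<union> sg 1 ` Cm (Suc m)) \<subseteq> VS.span (S \<union> sg 1 ` S)"
    by (intro VS.span_minimal) auto
  hence "VS.dim (VS.span (Cm (Suc m) \<union> sg 1 ` Cm (Suc m))) \<le> VS.dim (VS.span (S \<union> sg 1 ` S))"
    using G_dim_mono[OF finite_Ebas _ VS.subspace_span] sub Cm_E by blast
  thus "2 * dd (Suc m) \<le> VS.dim (VS.span (S \<union> sg 1 ` S)) + dd (Suc (Suc m))"
    using grass_step[of m] by simp
qed

lemma step_eq:
  assumes S: "Cm (Suc m) = VS.span S" and eq: "dd m + dd (Suc (Suc m)) = 2 * dd (Suc m)"
  shows "Cm m = VS.span (S \<union> sg 1 ` S)"
proof -
  note st = step_ineq[OF S]
  show ?thesis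
    by (rule G_dim_eq[OF finite_Ebas st(1) VS.subspace_span Cm_sub Cm_E, symmetric])
       (use st(2) eq in linarith)
qed

end


context csetup
begin

definition ch :: "(nat \<Rightarrow> 'a) \<Rightarrow> nat \<Rightarrow> (nat \<Rightarrow> 'a) set" where
  "ch h l = (\<lambda>t. sg t h) ` {..<l}"

lemma ch_step:
  assumes h: "h \<in> LL" and l: "l \<ge> 1"
  shows "ch h l \<union> sg 1 ` ch h l = ch h (Suc l)"
proof -
  have img: "sg 1 ` ch h l = (\<lambda>t. sg (Suc t) h) ` {..<l}"
    by (simp only: ch_def image_image sg_Suc[OF h])
  show ?thesis
  proof
    show "ch h l \<union> sg 1 ` ch h l \<subseteq> ch h (Suc l)"
    proof
      fix x assume "x \<in> ch h l \<union> sg 1 ` ch h l"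
      hence "x \<in> (\<lambda>t. sg t h) ` {..<l} \<or> x \<in> (\<lambda>t. sg (Suc t) h) ` {..<l}"
        unfolding img unfolding ch_def by blast
      thus "x \<in> ch h (Suc l)"
      proof
        assume "x \<in> (\<lambda>t. sg t h) ` {..<l}"
        then obtain t where "t < l" "x = sg t h" by blast
        thus ?thesis unfolding ch_def by (intro image_eqI[where x = t]) auto
      next
        assume "x \<in> (\<lambda>t. sg (Suc t) h) ` {..<l}"
        then obtain t where "t < l" "x = sg (Suc t) h" by blast
        thus ?thesis unfolding ch_def by (intro image_eqI[where x = "Suc t"]) auto
      qed
    qed
  next
    show "ch h (Suc l) \<subseteq> ch h l \<union> sg 1 ` ch h l"
    proof
      fix x assume "x \<in> ch h (Suc l)"
      then obtain t where t: "t < Suc l" "x = sg t h" unfolding ch_def by blast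
      show "x \<in> ch h l \<union> sg 1 ` ch h l"
      proof (cases "t < l")
        case True thus ?thesis using t unfolding ch_def by blast
      next
        case False
        hence "t = Suc (l - 1)" "l - 1 < l" using t(1) l by auto
        thus ?thesis using t(2) unfolding img by blast
      qed
    qed
  qed
qed

lemma ch_finite: "finite (ch h l)" unfolding ch_def by simp

lemma ch_card: "card (ch h l) \<le> l" unfolding ch_def using card_image_le[of "{..<l}"] by simp

lemma ch_L: "ch h l \<subseteq> LL" unfolding ch_def using sg_L by blast

lemma ch1: "h \<in> LL \<Longrightarrow> ch h 1 = {h}" unfolding ch_def using frob_0 by auto

lemma ch_mem0: "h \<in> LL \<Longrightarrow> l \<ge> 1 \<Longrightarrow> h \<in> ch h l"
  unfolding ch_def using frob_0[of h] by (intro image_eqI[of _ _ 0]) auto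

lemma two_step:
  assumes h: "h \<in> LL" and g: "g \<in> LL" and x: "x \<ge> 1" and y: "y \<ge> 1"
    and S: "Cm (Suc m) = VS.span (ch h x \<union> ch g y)"
    and eq: "dd m + dd (Suc (Suc m)) = 2 * dd (Suc m)"
  shows "Cm m = VS.span (ch h (Suc x) \<union> ch g (Suc y))"
proof -
  have "Cm m = VS.span ((ch h x \<union> ch g y) \<union> sg 1 ` (ch h x \<union> ch g y))"
    by (rule step_eq[OF S eq])
  also have "(ch h x \<union> ch g y) \<union> sg 1 ` (ch h x \<union> ch g y) = ch h (Suc x) \<union> ch g (Suc y)"
    using ch_step[OF h x] ch_step[OF g y] by (auto simp: image_Un)
  finally show ?thesis .
qed

lemma one_step:
  assumes h: "h \<in> LL" and x: "x \<ge> 1"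
    and S: "Cm (Suc m) = VS.span (ch h x)"
    and eq: "dd m + dd (Suc (Suc m)) = 2 * dd (Suc m)"
  shows "Cm m = VS.span (ch h (Suc x))"
  using step_eq[OF S eq] ch_step[OF h x] by simp

lemma chain_main:
  assumes a1: "a \<ge> 1" and ka: "2 * a \<le> k"
    and P1: "\<And>m. m \<le> a \<Longrightarrow> dd m + 2 * m = k"
    and P2: "\<And>m. a \<le> m \<Longrightarrow> m \<le> k - a \<Longrightarrow> dd m + a + m = k"
  obtains h g where "h \<in> C" "g \<in> C" "C = VS.span (ch h (k - a) \<union> ch g a)"
    "VS.span (ch h (k - a)) \<inter> VS.span (ch g a) = {0}"
proof -
  define b where "b = k - 2 * a"
  have stepA: "\<exists>h g. h \<in> LL \<and> g \<in> LL \<and> Cm (a - 1) = VS.span (ch h (Suc b) \<union> ch g 1)"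
  proof (cases "b = 0")
    case True
    have "dd (a - 1) = 2" using P1[of "a - 1"] a1 True b_def ka by simp
    then obtain h g where hg: "Cm (a - 1) = VS.span {h, g}"
      using G_dim2[OF finite_Ebas Cm_sub Cm_E] by blast
    have hgL: "h \<in> LL" "g \<in> LL" using hg Cm_L VS.span_base[of _ "{h, g}"] by blast+
    have "ch h (Suc b) \<union> ch g 1 = {h, g}" using True ch1 hgL by auto
    thus ?thesis using hg hgL by metis
  next
    case False
    define M where "M = k - a - 1"
    have aM: "a \<le> M" "M \<le> k - a" using False b_def M_def ka by auto
    have "dd M = 1" using P2[OF aM] M_def False b_def by simp
    then obtain h where h: "Cm M = VS.span {h}"
      using G_dim1[OF finite_Ebas Cm_sub Cm_E] by blast
    have hL: "h \<in> LL" using h Cm_L VS.span_base[of h "{h}"] by blast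
    have desc: "i \<le> M - a \<Longrightarrow> Cm (M - i) = VS.span (ch h (Suc i))" for i
    proof (induction i)
      case 0 thus ?case using h ch1[OF hL] by simp
    next
      case (Suc i)
      define m where "m = M - Suc i"
      have mSuc: "Suc m = M - i" "Suc (Suc m) = M - i + 1" using Suc.prems m_def by auto
      have IH: "Cm (Suc m) = VS.span (ch h (Suc i))" using Suc mSuc by simp
      have r: "a \<le> m" "Suc (Suc m) \<le> k - a" using Suc.prems m_def aM M_def by auto
      have "dd m + a + m = k" "dd (Suc m) + a + Suc m = k" "dd (Suc (Suc m)) + a + Suc (Suc m) = k"
        using P2[of m] P2[of "Suc m"] P2[of "Suc (Suc m)"] r by auto
      hence eq: "dd m + dd (Suc (Suc m)) = 2 * dd (Suc m)" by linarith
      have "Cm m = VS.span (ch h (Suc (Suc i)))" by (rule one_step[OF hL _ IH eq]) simp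
      thus ?case using m_def by simp
    qed
    have Ma: "M - a = b - 1" using M_def b_def by simp
    have e1: "M - (M - a) = a" "Suc (M - a) = b" using aM Ma False by auto
    have "Cm (M - (M - a)) = VS.span (ch h (Suc (M - a)))" using desc[of "M - a"] by simp
    hence Ca: "Cm a = VS.span (ch h b)" unfolding e1 .
    have aa: "Suc (a - 1) = a" using a1 by simp
    have Ca': "Cm (Suc (a - 1)) = VS.span (ch h b)" using Ca aa by simp
    note st = step_ineq[OF Ca']
    have chb: "ch h b \<union> sg 1 ` ch h b = ch h (Suc b)" using ch_step[OF hL] False by simp
    define X where "X = VS.span (ch h (Suc b))"
    have XC: "X \<subseteq> Cm (a - 1)" using st(1) chb X_def by simp
    have dda: "dd a = b" using P1[of a] b_def by simp
    have "Suc a \<le> k - a" using b_def False by simp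
    hence dda1: "dd (Suc a) + 1 = b" using P2[of "Suc a"] b_def by simp
    have dXge: "b + 1 \<le> VS.dim X" using st(2) chb aa dda dda1 X_def by simp
    have dXle: "VS.dim X \<le> b + 1"
      using VS.dim_le_card[of X "ch h (Suc b)"] ch_finite ch_card[of h "Suc b"] X_def VS.span_superset
      by simp
    have ddam1: "dd (a - 1) = b + 2" using P1[of "a - 1"] b_def a1 ka by simp
    have "\<not> Cm (a - 1) \<subseteq> X"
    proof
      assume "Cm (a - 1) \<subseteq> X"
      hence "dd (a - 1) \<le> VS.dim X" using G_dim_mono[OF finite_Ebas _ VS.subspace_span] X_def XC Cm_E
        by (metis VS.span_span order_trans)
      thus False using ddam1 dXle by simp
    qed
    then obtain g where g: "g \<in> Cm (a - 1)" "g \<notin> X" by blast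
    have gL: "g \<in> LL" using g Cm_L by blast
    have XE: "VS.span (ch h (Suc b)) \<subseteq> VS.span EE" using XC Cm_E X_def by blast
    have "VS.dim X + 1 \<le> VS.dim (VS.span (insert g (ch h (Suc b))))"
      using G_dim_insert[OF finite_Ebas XE] g gL L_span X_def by blast
    hence dge: "dd (a - 1) \<le> VS.dim (VS.span (insert g (ch h (Suc b))))" using dXge ddam1 by simp
    have subC: "VS.span (insert g (ch h (Suc b))) \<subseteq> Cm (a - 1)"
      using g(1) XC X_def VS.span_superset[of "ch h (Suc b)"]
      by (intro VS.span_minimal[OF _ Cm_sub]) blast
    have "VS.span (insert g (ch h (Suc b))) = Cm (a - 1)"
      by (rule G_dim_eq[OF finite_Ebas subC VS.subspace_span Cm_sub Cm_E dge])
    moreover have "insert g (ch h (Suc b)) = ch h (Suc b) \<union> ch g 1" using ch1[OF gL] by auto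
    ultimately show ?thesis using hL gL by metis
  qed
  then obtain h g where hL: "h \<in> LL" and gL: "g \<in> LL"
    and Cam1: "Cm (a - 1) = VS.span (ch h (Suc b) \<union> ch g 1)" by blast
  have desc2: "i \<le> a - 1 \<Longrightarrow> Cm (a - 1 - i) = VS.span (ch h (Suc b + i) \<union> ch g (Suc i))" for i
  proof (induction i)
    case 0 thus ?case using Cam1 by simp
  next
    case (Suc i)
    define m where "m = a - 1 - Suc i"
    have mSuc: "Suc m = a - 1 - i" "Suc (Suc m) = a - i" using Suc.prems m_def by auto
    have IH: "Cm (Suc m) = VS.span (ch h (Suc b + i) \<union> ch g (Suc i))" using Suc mSuc by simp
    have r: "Suc (Suc m) \<le> a" using Suc.prems m_def by auto
    have "dd m + 2 * m = k" "dd (Suc m) + 2 * m + 2 = k" "dd (Suc (Suc m)) + 2 * m + 4 = k"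
      using P1[of m] P1[of "Suc m"] P1[of "Suc (Suc m)"] r by auto
    hence eq: "dd m + dd (Suc (Suc m)) = 2 * dd (Suc m)" by linarith
    have "Cm m = VS.span (ch h (Suc (Suc b + i)) \<union> ch g (Suc (Suc i)))"
      by (rule two_step[OF hL gL _ _ IH eq]) simp_all
    thus ?case using m_def by simp
  qed
  have "Cm 0 = VS.span (ch h (Suc b + (a - 1)) \<union> ch g (Suc (a - 1)))" using desc2[of "a - 1"] by simp
  moreover have "Suc b + (a - 1) = k - a" "Suc (a - 1) = a" using a1 b_def ka by auto
  ultimately have Ceq: "C = VS.span (ch h (k - a) \<union> ch g a)" using Cm0 by simp
  define A where "A = ch h (k - a)"
  define B where "B = ch g a"
  have fA: "finite A" "finite B" using ch_finite A_def B_def by auto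
  have cA: "card A + card B \<le> k" using ch_card[of h "k - a"] ch_card[of g a] A_def B_def ka by simp
  have dC: "VS.dim C = k" using P1[of 0] Cm0 by simp
  have "VS.dim (VS.span (A \<union> B)) \<le> card (A \<union> B)"
    using VS.dim_le_card[of "VS.span (A \<union> B)" "A \<union> B"] fA by simp
  hence kle: "k \<le> card (A \<union> B)" using Ceq dC A_def B_def by simp
  have "card (A \<union> B) + card (A \<inter> B) = card A + card B" using card_Un_Int[OF fA] by simp
  hence "card (A \<inter> B) = 0" using kle cA by simp
  hence disj: "A \<inter> B = {}" using fA by simp
  have "VS.independent (A \<union> B)"
    using G_span_card_indep[OF finite_Ebas] fA kle Ceq dC A_def B_def card_Un_le[of A B] cA
    by (metis finite_UnI le_antisym order_trans)
  hence sp0: "VS.span A \<inter> VS.span B = {0}" by (rule G_disj[OF fA(1) _ disj])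
  have "h \<in> ch h (k - a)" using ch_mem0[OF hL, of "k - a"] ka a1 by simp
  hence hC: "h \<in> C" unfolding Ceq by (intro VS.span_base) blast
  have "g \<in> ch g a" using ch_mem0[OF gL, of a] a1 by simp
  hence gC: "g \<in> C" unfolding Ceq by (intro VS.span_base) blast
  show ?thesis using that hC gC Ceq sp0 A_def B_def by blast
qed

end


lemma atLeast0_minus1: "i \<ge> 1 \<Longrightarrow> {0..i - 1} = {..<(i::nat)}" by auto

theorem theorem3p6:
  fixes q n k :: nat and s :: int and C :: "(nat \<Rightarrow> 'a::{field,finite}) set"
    and p e :: nat
  assumes "prime p" and "e \<ge> 1" and "q = p ^ e"
    and "n \<ge> 1" and "card (UNIV :: 'a set) = q ^ n"
    and "gcd s (int n) = 1"
    and "C \<subseteq> lin_polys n" and "Fsubspace C" and "Fdim C = k" and "k > 2"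
    and "Fdim (C \<inter> frob_set q n s C) = k - 2"
    and "C \<inter> U1 q n = {0}"
  shows
    "(let V = C \<inter> frob_set q n s C in
      (int (Fdim (V \<inter> frob_set q n s V)) = int k - 3 \<longrightarrow>
        (\<exists>f g. f \<in> C \<and> g \<in> C \<and>
           C = Fspan ((\<lambda>t. frob q n (s * int t) f) ` {0..k-2} \<union> {g}) \<and>
           Fspan ((\<lambda>t. frob q n (s * int t) f) ` {0..k-2}) \<inter> Fspan {g} = {0}))
      \<and>
      (int (Fdim (V \<inter> frob_set q n s V)) = int k - 4 \<longrightarrow>
        (\<exists>f g i j. f \<in> C \<and> g \<in> C \<and> i \<ge> 2 \<and> j \<ge> 2 \<and> i + j = k \<and>
           C = Fspan ((\<lambda>t. frob q n (s * int t) f) ` {0..i-1}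
                    \<union> (\<lambda>t. frob q n (s * int t) g) ` {0..j-1}) \<and>
           Fspan ((\<lambda>t. frob q n (s * int t) f) ` {0..i-1})
             \<inter> Fspan ((\<lambda>t. frob q n (s * int t) g) ` {0..j-1}) = {0})))"
  proof -
  interpret csetup q n p e s C
    by unfold_locales (use assms in auto)
  have sg1: "frob q n s = sg 1" by simp
  have H1: "C \<inter> frob_set q n s C = sg 1 ` Cm 1"
    using Cm_int[of 0] unfolding Cm0 frob_set_def sg1 by simp
  define V where "V = C \<inter> frob_set q n s C"
  have V1: "V = sg 1 ` Cm 1" using H1 V_def by simp
  have H2: "V \<inter> frob_set q n s V = sg 1 ` (sg 1 ` Cm 2)"
  proof -
    have "V \<inter> frob_set q n s V = sg 1 ` Cm 1 \<inter> sg 1 ` (sg 1 ` Cm 1)"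
      unfolding V1 frob_set_def sg1 ..
    also have "\<dots> = sg 1 ` (Cm 1 \<inter> sg 1 ` Cm 1)"
      by (rule inj_on_image_Int[OF sg_inj Cm_L, symmetric]) (use sg_L in blast)
    also have "Cm 1 \<inter> sg 1 ` Cm 1 = sg 1 ` Cm 2" using Cm_int[of 1] by (simp add: numeral_2_eq_2)
    finally show ?thesis .
  qed
  have d0: "dd 0 = k" using assms(9) Cm0 by simp
  have d1: "dd 1 + 2 = k"
  proof -
    have "VS.dim (sg 1 ` Cm 1) = k - 2" using assms(11) H1 by simp
    thus ?thesis using dim_img[of 1] assms(10) by simp
  qed
  have d2: "VS.dim (V \<inter> frob_set q n s V) = dd 2"
  proof -
    have "VS.dim (sg 1 ` (sg 1 ` Cm 2)) = VS.dim (sg 1 ` Cm 2)"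
      by (rule sg_dim[OF img_sub]) (use sg_L in blast)
    thus ?thesis using H2 dim_img[of 2] by simp
  qed
  obtain a where a1: "a \<ge> 1" and ka: "2 * a \<le> k" and P1: "\<And>m. m \<le> a \<Longrightarrow> dd m + 2 * m = k"
    and P2: "\<And>m. a \<le> m \<Longrightarrow> m \<le> k - a \<Longrightarrow> dd m + a + m = k"
    and aiff: "a = 1 \<longleftrightarrow> dd 2 + 3 = k"
    using seq_lemma[of dd k, OF d0 d1 assms(10) d_mono d_drop d_strict] by blast
  obtain h g where hC: "h \<in> C" and gC: "g \<in> C" and Ceq: "C = VS.span (ch h (k - a) \<union> ch g a)"
    and sp0: "VS.span (ch h (k - a)) \<inter> VS.span (ch g a) = {0}"
    using chain_main[OF a1 ka P1 P2] by blast
  have hL: "h \<in> LL" and gL: "g \<in> LL" using hC gC C_L by auto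
  have part1: "int (VS.dim (V \<inter> frob_set q n s V)) = int k - 3 \<longrightarrow>
        (\<exists>f g. f \<in> C \<and> g \<in> C \<and>
           C = VS.span ((\<lambda>t. frob q n (s * int t) f) ` {0..k-2} \<union> {g}) \<and>
           VS.span ((\<lambda>t. frob q n (s * int t) f) ` {0..k-2}) \<inter> VS.span {g} = {0})"
  proof
    assume "int (VS.dim (V \<inter> frob_set q n s V)) = int k - 3"
    hence "dd 2 + 3 = k" using d2 by simp
    hence a: "a = 1" using aiff by simp
    have e1: "ch h (k - a) = (\<lambda>t. frob q n (s * int t) h) ` {0..k-2}"
      unfolding ch_def a using assms(10) by (intro image_cong) auto
    have e2: "ch g a = {g}" using ch1[OF gL] a by simp
    show "\<exists>f g. f \<in> C \<and> g \<in> C \<and>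
           C = VS.span ((\<lambda>t. frob q n (s * int t) f) ` {0..k-2} \<union> {g}) \<and>
           VS.span ((\<lambda>t. frob q n (s * int t) f) ` {0..k-2}) \<inter> VS.span {g} = {0}"
      using hC gC Ceq sp0 unfolding e1 e2 by blast
  qed
  have part2: "int (VS.dim (V \<inter> frob_set q n s V)) = int k - 4 \<longrightarrow>
        (\<exists>f g i j. f \<in> C \<and> g \<in> C \<and> i \<ge> 2 \<and> j \<ge> 2 \<and> i + j = k \<and>
           C = VS.span ((\<lambda>t. frob q n (s * int t) f) ` {0..i-1}
                    \<union> (\<lambda>t. frob q n (s * int t) g) ` {0..j-1}) \<and>
           VS.span ((\<lambda>t. frob q n (s * int t) f) ` {0..i-1})
             \<inter> VS.span ((\<lambda>t. frob q n (s * int t) g) ` {0..j-1}) = {0})"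
  proof
    assume "int (VS.dim (V \<inter> frob_set q n s V)) = int k - 4"
    hence "dd 2 + 4 = k" using d2 by simp
    hence a2: "a \<ge> 2" using aiff a1 by auto
    have e1: "ch h (k - a) = (\<lambda>t. frob q n (s * int t) h) ` {0..(k - a) - 1}"
      unfolding ch_def using a2 ka by (intro image_cong) auto
    have e2: "ch g a = (\<lambda>t. frob q n (s * int t) g) ` {0..a - 1}"
      unfolding ch_def using a2 by (intro image_cong) auto
    have "k - a \<ge> 2" "(k - a) + a = k" using a2 ka by auto
    thus "\<exists>f g i j. f \<in> C \<and> g \<in> C \<and> i \<ge> 2 \<and> j \<ge> 2 \<and> i + j = k \<and>
           C = VS.span ((\<lambda>t. frob q n (s * int t) f) ` {0..i-1}
                    \<union> (\<lambda>t. frob q n (s * int t) g) ` {0..j-1}) \<and>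
           VS.span ((\<lambda>t. frob q n (s * int t) f) ` {0..i-1})
             \<inter> VS.span ((\<lambda>t. frob q n (s * int t) g) ` {0..j-1}) = {0}"
      using hC gC Ceq sp0 a2 unfolding e1 e2 by blast
  qed
  show ?thesis unfolding Let_def V_def[symmetric] using part1 part2 by blast
qed


end
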